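(* Let $\mathcal{G}$ be a DAG and $K$ a set of nodes. Let $p_1$ be a path from $a$ to $b$ and $p_2$ a path from $c$ to $d$, both open given $K$, and suppose they intersect. Let $i$ be the node on $p_1$ closest to $a$ at which $p_1$ and $p_2$ intersect, and let $p=p_1(a,i)\oplus p_2(i,d)$. Then $p$ is closed given $K$ if and only if $K\cap\mathrm{de}(i)=\emptyset$ and $i$ is a collider on $p$.
   Context: A path is a sequence of distinct nodes with consecutive nodes adjacent; for a path $p$ through nodes $u$ and $v$, $p(u,v)$ is its subpath from $u$ to $v$, and $p\oplus q$ is the concatenation of a path ending at a node with a path starting at that node. A node $k$ on a path is a collider if the path has consecutive edges $u\to k\leftarrow w$, otherwise a non-collider. $\mathrm{de}(i)$ is the set of descendants of $i$, i.e. nodes reachable by a directed path from $i$, where by convention $i\in\mathrm{de}(i)$. A path is open given $K$ if every non-collider on it is outside $K$ and every collider on it has a descendant in $K$; otherwise it is closed given $K$. *)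

theory Defs
  imports Main
begin

text \<open>A directed graph is given by a node set V and an edge relation E,
  where (u,v) \<in> E means u \<rightarrow> v.\<close>

definition is_dag :: "'a set \<Rightarrow> ('a \<times> 'a) set \<Rightarrow> bool" where
  "is_dag V E \<longleftrightarrow> finite V \<and> E \<subseteq> V \<times> V \<and> acyclic E"

definition adjacent :: "('a \<times> 'a) set \<Rightarrow> 'a \<Rightarrow> 'a \<Rightarrow> bool" where
  "adjacent E u v \<longleftrightarrow> (u, v) \<in> E \<or> (v, u) \<in> E"

definition is_path :: "'a set \<Rightarrow> ('a \<times> 'a) set \<Rightarrow> 'a list \<Rightarrow> bool" where
  "is_path V E p \<longleftrightarrow> p \<noteq> [] \<and> distinct p \<and> set p \<subseteq> V \<and>
     (\<forall>j. Suc j < length p \<longrightarrow> adjacent E (p ! j) (p ! Suc j))"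

definition path_from_to :: "'a set \<Rightarrow> ('a \<times> 'a) set \<Rightarrow> 'a list \<Rightarrow> 'a \<Rightarrow> 'a \<Rightarrow> bool" where
  "path_from_to V E p u v \<longleftrightarrow> is_path V E p \<and> hd p = u \<and> last p = v"

definition pos :: "'a list \<Rightarrow> 'a \<Rightarrow> nat" where
  "pos p u = (THE j. j < length p \<and> p ! j = u)"

definition subpath :: "'a list \<Rightarrow> 'a \<Rightarrow> 'a \<Rightarrow> 'a list" where
  "subpath p u v =
     (if pos p u \<le> pos p v then take (pos p v - pos p u + 1) (drop (pos p u) p)
      else rev (take (pos p u - pos p v + 1) (drop (pos p v) p)))"

text \<open>Concatenation p \<oplus> q of a path ending at a node with a path starting at it.\<close>
definition path_concat :: "'a list \<Rightarrow> 'a list \<Rightarrow> 'a list" (infixr "\<oplus>\<^sub>p" 65) where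
  "p \<oplus>\<^sub>p q = p @ tl q"

definition is_collider :: "('a \<times> 'a) set \<Rightarrow> 'a list \<Rightarrow> 'a \<Rightarrow> bool" where
  "is_collider E p k \<longleftrightarrow> (\<exists>j. 0 < j \<and> Suc j < length p \<and> p ! j = k \<and>
       (p ! (j - 1), k) \<in> E \<and> (p ! Suc j, k) \<in> E)"

definition de :: "('a \<times> 'a) set \<Rightarrow> 'a \<Rightarrow> 'a set" where
  "de E i = {j. (i, j) \<in> E\<^sup>*}"

definition open_given :: "('a \<times> 'a) set \<Rightarrow> 'a set \<Rightarrow> 'a list \<Rightarrow> bool" where
  "open_given E K p \<longleftrightarrow>
     (\<forall>k \<in> set p. (\<not> is_collider E p k \<longrightarrow> k \<notin> K) \<and>
                  (is_collider E p k \<longrightarrow> de E k \<inter> K \<noteq> {}))"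

definition closed_given :: "('a \<times> 'a) set \<Rightarrow> 'a set \<Rightarrow> 'a list \<Rightarrow> bool" where
  "closed_given E K p \<longleftrightarrow> \<not> open_given E K p"

end

theory Submission
  imports Defs
begin

definition coll :: "('a \<times> 'a) set \<Rightarrow> 'a list \<Rightarrow> nat \<Rightarrow> bool" where
  "coll E p j \<longleftrightarrow> 0 < j \<and> Suc j < length p \<and> (p ! (j - 1), p ! j) \<in> E \<and> (p ! Suc j, p ! j) \<in> E"

lemma pos_nth: "distinct xs \<Longrightarrow> j < length xs \<Longrightarrow> pos xs (xs ! j) = j"
  unfolding pos_def by (rule the_equality) (auto simp: nth_eq_iff_index_eq)

lemma pos_in: "distinct xs \<Longrightarrow> x \<in> set xs \<Longrightarrow> pos xs x < length xs \<and> xs ! pos xs x = x"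
  by (metis in_set_conv_nth pos_nth)

lemma coll_distinct: "distinct p \<Longrightarrow> j < length p \<Longrightarrow> is_collider E p (p ! j) \<longleftrightarrow> coll E p j"
  unfolding is_collider_def coll_def
  by (metis Suc_lessD nth_eq_iff_index_eq)

lemma open_pos: "distinct p \<Longrightarrow> open_given E K p \<longleftrightarrow>
   (\<forall>j<length p. (\<not> coll E p j \<longrightarrow> p ! j \<notin> K) \<and> (coll E p j \<longrightarrow> de E (p ! j) \<inter> K \<noteq> {}))"
  unfolding open_given_def
proof (intro iffI allI impI ballI)
  fix j assume d: "distinct p" and h: "\<forall>k\<in>set p. (\<not> is_collider E p k \<longrightarrow> k \<notin> K) \<and> (is_collider E p k \<longrightarrow> de E k \<inter> K \<noteq> {})" and j: "j < length p"
  then show "(\<not> coll E p j \<longrightarrow> p ! j \<notin> K) \<and> (coll E p j \<longrightarrow> de E (p ! j) \<inter> K \<noteq> {})"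
    using coll_distinct[OF d j, of E] nth_mem[OF j] by blast
next
  fix k assume d: "distinct p" and h: "\<forall>j<length p. (\<not> coll E p j \<longrightarrow> p ! j \<notin> K) \<and> (coll E p j \<longrightarrow> de E (p ! j) \<inter> K \<noteq> {})" and k: "k \<in> set p"
  then obtain j where j: "j < length p" "k = p ! j" by (auto simp: in_set_conv_nth)
  then show "(\<not> is_collider E p k \<longrightarrow> k \<notin> K) \<and> (is_collider E p k \<longrightarrow> de E k \<inter> K \<noteq> {})"
    using coll_distinct[OF d j(1), of E] h by blast
qed

lemma coll_left:
  assumes "j < n" "n < length p1" "p1 ! n = p2 ! m" "m < length p2"
  shows "coll E (take n p1 @ drop m p2) j \<longleftrightarrow> coll E p1 j"
proof -
  have "(take n p1 @ drop m p2) ! k = p1 ! k" if "k \<le> n" for k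
    using that assms by (cases "k = n") (auto simp: nth_append)
  then show ?thesis using assms unfolding coll_def by auto
qed

lemma coll_right:
  assumes "n < j" "n < length p1" "p1 ! n = p2 ! m" "m < length p2"
  shows "coll E (take n p1 @ drop m p2) j \<longleftrightarrow> coll E p2 (m + j - n)"
proof -
  have "(take n p1 @ drop m p2) ! k = p2 ! (m + k - n)" if "k \<ge> n" for k
    using that assms by (cases "k = n") (auto simp: nth_append)
  then show ?thesis using assms unfolding coll_def
    by (auto simp: Suc_diff_le)
qed


theorem lemma6p3:
  fixes V :: "'a set" and E :: "('a \<times> 'a) set" and K :: "'a set"
    and p1 p2 :: "'a list" and a b c d i :: 'a
  assumes "is_dag V E"
    and "path_from_to V E p1 a b" and "path_from_to V E p2 c d"
    and "open_given E K p1" and "open_given E K p2"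
    and "set p1 \<inter> set p2 \<noteq> {}"
    and "i \<in> set p1" and "i \<in> set p2"
    and "\<forall>x \<in> set p1. pos p1 x < pos p1 i \<longrightarrow> x \<notin> set p2"
  shows "closed_given E K (subpath p1 a i \<oplus>\<^sub>p subpath p2 i d) \<longleftrightarrow>
           (K \<inter> de E i = {} \<and> is_collider E (subpath p1 a i \<oplus>\<^sub>p subpath p2 i d) i)"
proof -
  have d1: "distinct p1" "p1 \<noteq> []" "hd p1 = a" and d2: "distinct p2" "p2 \<noteq> []" "last p2 = d"
    using assms(2,3) unfolding path_from_to_def is_path_def by auto
  have a0: "p1 ! 0 = a" using d1 by (simp add: hd_conv_nth)
  have pa: "pos p1 a = 0" using pos_nth[OF d1(1), of 0] a0 d1(2) by simp
  define n where "n = pos p1 i"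
  have n: "n < length p1" "p1 ! n = i" using pos_in[OF d1(1) assms(7)] n_def by auto
  define m where "m = pos p2 i"
  have m: "m < length p2" "p2 ! m = i" using pos_in[OF d2(1) assms(8)] m_def by auto
  have dl: "p2 ! (length p2 - 1) = d" using d2 by (simp add: last_conv_nth)
  have pd: "pos p2 d = length p2 - 1" using pos_nth[OF d2(1), of "length p2 - 1"] dl d2(2) by simp
  have s1: "subpath p1 a i = take (n + 1) p1"
    unfolding subpath_def pa n_def[symmetric] by simp
  have s2: "subpath p2 i d = drop m p2"
    unfolding subpath_def pd m_def[symmetric] using m by (auto simp: not_le)
  define P where "P = take n p1 @ drop m p2"
  have PP: "subpath p1 a i \<oplus>\<^sub>p subpath p2 i d = P"
  proof -
    have "take (n + 1) p1 = take n p1 @ [i]" using n by (simp add: take_Suc_conv_app_nth)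
    moreover have "drop m p2 = i # drop (Suc m) p2" using m by (metis Cons_nth_drop_Suc)
    ultimately show ?thesis unfolding s1 s2 P_def path_concat_def by simp
  qed
  have lenP: "length P = n + (length p2 - m)" using n m by (simp add: P_def)
  have Pn: "P ! n = i" using n m by (simp add: P_def nth_append)
  have iP: "i \<in> set P" proof -
    have "n < length P" using lenP m by simp
    then show ?thesis using Pn nth_mem by metis
  qed
  have dP: "distinct P"
  proof -
    have "set (take n p1) \<inter> set (drop m p2) = {}"
    proof (rule ccontr)
      assume "\<not> ?thesis"
      then obtain x where x: "x \<in> set (take n p1)" "x \<in> set p2" by (auto dest: in_set_dropD)
      then obtain j where j: "j < n" "x = p1 ! j" using n by (auto simp: in_set_conv_nth)
      have "pos p1 x = j" using j n pos_nth[OF d1(1)] by simp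
      then show False using assms(9) j x n n_def by auto
    qed
    then show ?thesis using d1 d2 by (simp add: P_def)
  qed
  note o1 = open_pos[OF d1(1), of E K] and o2 = open_pos[OF d2(1), of E K]
  show ?thesis unfolding PP closed_given_def
  proof
    assume "\<not> open_given E K P"
    then obtain j where j: "j < length P"
      and v: "(\<not> coll E P j \<and> P ! j \<in> K) \<or> (coll E P j \<and> de E (P ! j) \<inter> K = {})"
      unfolding open_pos[OF dP] by blast
    consider "j < n" | "j = n" | "n < j" by linarith
    then show "K \<inter> de E i = {} \<and> is_collider E P i"
    proof cases
      case 1
      have "P ! j = p1 ! j" using 1 n by (simp add: P_def nth_append)
      moreover have "coll E P j = coll E p1 j" unfolding P_def using coll_left[OF 1 n(1) _ m(1), of E] n m by simp
      moreover have "j < length p1" using 1 n by simp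
      ultimately have False using v assms(4) o1 by auto
      then show ?thesis ..
    next
      case 3
      have "P ! j = p2 ! (m + j - n)" using 3 n m by (simp add: P_def nth_append)
      moreover have "m + j - n < length p2" using 3 j lenP by linarith
      moreover have "coll E P j = coll E p2 (m + j - n)" unfolding P_def using coll_right[OF 3 n(1) _ m(1), of E] n m by simp
      ultimately have False using v assms(5) o2 by auto
      then show ?thesis ..
    next
      case 2
      show ?thesis
      proof (cases "coll E P n")
        case True
        then show ?thesis using v 2 Pn coll_distinct[OF dP j, of E] by auto
      next
        case False
        with v 2 Pn have iK: "i \<in> K" by auto
        have c1: "coll E p1 n" using o1 assms(4) n iK by auto
        have c2: "coll E p2 m" using o2 assms(5) m iK by auto
        have "coll E P n"
        proof -
          have "P ! (n - 1) = p1 ! (n - 1)" using c1 n unfolding coll_def by (simp add: P_def nth_append)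
          moreover have "P ! Suc n = p2 ! Suc m" using c2 n m unfolding coll_def
            by (simp add: P_def nth_append)
          ultimately show ?thesis using c1 c2 Pn n m lenP unfolding coll_def by auto
        qed
        then show ?thesis using False by simp
      qed
    qed
  next
    assume "K \<inter> de E i = {} \<and> is_collider E P i"
    then show "\<not> open_given E K P" using iP unfolding open_given_def by blast
  qed
qed

end
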